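(* Let $f:\mathbb{R}_+\to\mathbb{R}$ be completely monotone to order four. Then for every nonnegative real random variable $W$, \[ \operatorname{Cov}(W,f'(W))=\mathbb{E}\big[(W-\mathbb{E}W)f'(W)\big]\le\mathbb{E}[W^2]\cdot\mathbb{E}[f''(W)], \] whenever the expectations are finite.
   Context: A function $f:I\to\mathbb{R}$ on an interval $I\subseteq\mathbb{R}$ is completely monotone to order $K$ if its first $K$ derivatives exist and $(-1)^kf^{(k)}(w)\ge0$ for all $w\in I$ and each $k=0,1,\dots,K$; at an endpoint of $I$ contained in $I$, derivatives are one-sided. Here $\mathbb{R}_+=[0,\infty)$. *)

theory Defs
  imports "HOL-Probability.Probability"
begin

text \<open>The function
  is given together with its sequence of derivatives D: D 0 is the function itself,
  D (Suc k) is the derivative of D k (one-sided at endpoints contained in S, via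
  derivatives within S), for k < K, and (-1)^k * D k w \<ge> 0 for all w in S, k \<le> K.\<close>

definition completely_monotone_order :: "nat \<Rightarrow> real set \<Rightarrow> (nat \<Rightarrow> real \<Rightarrow> real) \<Rightarrow> bool" where
  "completely_monotone_order K S D \<longleftrightarrow>
     (\<forall>k<K. \<forall>w\<in>S. (D k has_real_derivative D (Suc k) w) (at w within S)) \<and>
     (\<forall>k\<le>K. \<forall>w\<in>S. (-1) ^ k * D k w \<ge> 0)"

end

theory Submission
  imports Defs
begin

lemma mvt_D:
  assumes cm: "completely_monotone_order 4 {0..} D" and k: "k < 4"
    and ab: "0 \<le> a" "a < b"
  shows "\<exists>x\<in>{a<..<b}. D k b - D k a = D (Suc k) x * (b - a)"
proof -
  have d: "\<And>x. a \<le> x \<Longrightarrow> x \<le> b \<Longrightarrow> (D k has_derivative (\<lambda>h. D (Suc k) x * h)) (at x within {a..b})"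
  proof -
    fix x assume "a \<le> x" "x \<le> b"
    then have "(D k has_real_derivative D (Suc k) x) (at x within {0..})"
      using cm k ab unfolding completely_monotone_order_def by auto
    then have "(D k has_real_derivative D (Suc k) x) (at x within {a..b})"
      by (rule DERIV_subset) (use ab in auto)
    then show "(D k has_derivative (\<lambda>h. D (Suc k) x * h)) (at x within {a..b})"
      by (simp add: has_field_derivative_def)
  qed
  show ?thesis using mvt_simple[OF ab(2) d] by simp
qed

lemma sgn_D:
  assumes cm: "completely_monotone_order 4 {0..} D" and "0 \<le> w"
  shows "D 2 w \<ge> 0" "D 3 w \<le> 0"
proof -
  have "(-1)^2 * D 2 w \<ge> 0" "(-1)^3 * D 3 w \<ge> 0"
  proof -
    have h: "\<forall>k\<le>4. \<forall>w\<in>{0..}. 0 \<le> (- 1) ^ k * D k w" using cm unfolding completely_monotone_order_def by blast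
    show "(-1)^2 * D 2 w \<ge> 0" by (rule h[rule_format]) (use assms(2) in auto)
    show "(-1)^3 * D 3 w \<ge> 0" by (rule h[rule_format]) (use assms(2) in auto)
  qed
  then show "D 2 w \<ge> 0" "D 3 w \<le> 0" by auto
qed

lemma D2_dec:
  assumes cm: "completely_monotone_order 4 {0..} D" and "0 \<le> a" "a \<le> b"
  shows "D 2 b \<le> D 2 a"
proof (cases "a = b")
  case False
  then have "a < b" using assms by auto
  from mvt_D[OF cm _ assms(2) this, of 2] obtain x where
    x: "x \<in> {a<..<b}" "D 2 b - D 2 a = D 3 x * (b - a)" by (auto simp: numeral_eq_Suc)
  have "D 3 x \<le> 0" using sgn_D(2)[OF cm] x assms by auto
  then have "D 3 x * (b - a) \<le> 0" using \<open>a < b\<close> by (simp add: mult_nonpos_nonneg)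
  then show ?thesis using x by simp
qed simp

lemma D1_conc:
  assumes cm: "completely_monotone_order 4 {0..} D" and "0 \<le> a" "a \<le> b"
  shows "D 1 b - D 1 a \<le> D 2 a * (b - a)"
proof (cases "a = b")
  case False
  then have "a < b" using assms by auto
  from mvt_D[OF cm _ assms(2) this, of 1] obtain x where
    x: "x \<in> {a<..<b}" "D 1 b - D 1 a = D 2 x * (b - a)" by (auto simp: numeral_eq_Suc)
  have "D 2 x \<le> D 2 a" using D2_dec[OF cm, of a x] x assms by auto
  then show ?thesis using x \<open>a < b\<close> by (simp add: mult_right_mono)
qed simp

lemma key_le:
  assumes cm: "completely_monotone_order 4 {0..} D" and "0 \<le> a" "a \<le> b"
  shows "(b - a) * (D 1 b - D 1 a) \<le> b\<^sup>2 * D 2 a"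
proof -
  have "(b - a) * (D 1 b - D 1 a) \<le> (b - a) * (D 2 a * (b - a))"
    using D1_conc[OF assms] assms by (simp add: mult_left_mono)
  also have "\<dots> = D 2 a * (b - a)^2" by (simp add: power2_eq_square)
  also have "\<dots> \<le> D 2 a * b^2"
    using sgn_D(1)[OF cm assms(2)] assms by (intro mult_left_mono power_mono) auto
  finally show ?thesis by (simp add: mult.commute)
qed

lemma key:
  assumes cm: "completely_monotone_order 4 {0..} D" and "0 \<le> a" "0 \<le> b"
  shows "(a - b) * (D 1 a - D 1 b) \<le> b\<^sup>2 * D 2 a + a\<^sup>2 * D 2 b"
proof (cases "a \<le> b")
  case True
  have "(a - b) * (D 1 a - D 1 b) = (b - a) * (D 1 b - D 1 a)" by algebra
  also have "\<dots> \<le> b\<^sup>2 * D 2 a" using key_le[OF cm assms(2) True] .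
  also have "\<dots> \<le> b\<^sup>2 * D 2 a + a\<^sup>2 * D 2 b" using sgn_D(1)[OF cm assms(3)] by simp
  finally show ?thesis .
next
  case False
  have "(a - b) * (D 1 a - D 1 b) \<le> a\<^sup>2 * D 2 b" using key_le[OF cm assms(3), of a] False by simp
  also have "\<dots> \<le> b\<^sup>2 * D 2 a + a\<^sup>2 * D 2 b" using sgn_D(1)[OF cm assms(2)] by simp
  finally show ?thesis .
qed

theorem lemma7p3:
  fixes M :: "'a measure" and W :: "'a \<Rightarrow> real" and D :: "nat \<Rightarrow> real \<Rightarrow> real"
  assumes "prob_space M"
    and "completely_monotone_order 4 {0..} D"
    and "W \<in> borel_measurable M"
    and "\<forall>x\<in>space M. W x \<ge> 0"
    and "integrable M W"
    and "integrable M (\<lambda>x. D 1 (W x))"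
    and "integrable M (\<lambda>x. W x * D 1 (W x))"
    and "integrable M (\<lambda>x. (W x)\<^sup>2)"
    and "integrable M (\<lambda>x. D 2 (W x))"
  shows "(\<integral>x. (W x - (\<integral>y. W y \<partial>M)) * D 1 (W x) \<partial>M)
           \<le> (\<integral>x. (W x)\<^sup>2 \<partial>M) * (\<integral>x. D 2 (W x) \<partial>M)"
proof -
  interpret prob_space M by fact
  define c where "c = (\<integral>y. W y \<partial>M)"
  define s where "s = (\<integral>y. (W y)\<^sup>2 \<partial>M)"
  define p where "p = (\<integral>y. D 2 (W y) \<partial>M)"
  define q where "q = (\<integral>y. W y * D 1 (W y) \<partial>M)"
  define r where "r = (\<integral>y. D 1 (W y) \<partial>M)"
  note I = assms(5-9)
  have lhs: "(\<integral>x. (W x - c) * D 1 (W x) \<partial>M) = q - c * r"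
  proof -
    have "(\<integral>x. (W x - c) * D 1 (W x) \<partial>M) = (\<integral>x. W x * D 1 (W x) - c * D 1 (W x) \<partial>M)"
      by (simp add: algebra_simps)
    also have "\<dots> = q - c * r" using I by (simp add: q_def r_def)
    finally show ?thesis .
  qed
  have pt: "q - W y * r - c * D 1 (W y) + W y * D 1 (W y) \<le> (W y)\<^sup>2 * p + s * D 2 (W y)"
    if y: "y \<in> space M" for y
  proof -
    have "(\<integral>x. (W x - W y) * (D 1 (W x) - D 1 (W y)) \<partial>M)
        = (\<integral>x. (W x * D 1 (W x) - W y * D 1 (W x)) + (W y * D 1 (W y) - D 1 (W y) * W x) \<partial>M)"
      by (simp add: algebra_simps)
    also have "\<dots> = (\<integral>x. W x * D 1 (W x) - W y * D 1 (W x) \<partial>M) + (\<integral>x. W y * D 1 (W y) - D 1 (W y) * W x \<partial>M)"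
    proof (rule Bochner_Integration.integral_add)
      show "integrable M (\<lambda>x. W x * D 1 (W x) - W y * D 1 (W x))" using I by auto
      show "integrable M (\<lambda>x. W y * D 1 (W y) - D 1 (W y) * W x)" using I by auto
    qed
    also have "\<dots> = q - W y * r - c * D 1 (W y) + W y * D 1 (W y)"
      using I by (simp add: q_def r_def c_def prob_space)
    finally have e1: "(\<integral>x. (W x - W y) * (D 1 (W x) - D 1 (W y)) \<partial>M) = q - W y * r - c * D 1 (W y) + W y * D 1 (W y)" .
    have e2: "(\<integral>x. (W y)\<^sup>2 * D 2 (W x) + (W x)\<^sup>2 * D 2 (W y) \<partial>M) = (W y)\<^sup>2 * p + s * D 2 (W y)"
      using I by (simp add: p_def s_def)
    have "(\<integral>x. (W x - W y) * (D 1 (W x) - D 1 (W y)) \<partial>M) \<le> (\<integral>x. (W y)\<^sup>2 * D 2 (W x) + (W x)\<^sup>2 * D 2 (W y) \<partial>M)"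
    proof (rule integral_mono)
      show "integrable M (\<lambda>x. (W x - W y) * (D 1 (W x) - D 1 (W y)))"
      proof -
        have "integrable M (\<lambda>x. (W x * D 1 (W x) - W y * D 1 (W x)) + (W y * D 1 (W y) - D 1 (W y) * W x))"
          using I by auto
        then show ?thesis by (simp add: algebra_simps)
      qed
      show "integrable M (\<lambda>x. (W y)\<^sup>2 * D 2 (W x) + (W x)\<^sup>2 * D 2 (W y))" using I by auto
      show "(W x - W y) * (D 1 (W x) - D 1 (W y)) \<le> (W y)\<^sup>2 * D 2 (W x) + (W x)\<^sup>2 * D 2 (W y)"
        if "x \<in> space M" for x
        using key[OF assms(2)] assms(4) that y by auto
    qed
    then show ?thesis using e1 e2 by simp
  qed
  have "(\<integral>y. q - W y * r - c * D 1 (W y) + W y * D 1 (W y) \<partial>M) \<le> (\<integral>y. (W y)\<^sup>2 * p + s * D 2 (W y) \<partial>M)"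
    using I pt by (intro integral_mono) auto
  moreover have "(\<integral>y. q - W y * r - c * D 1 (W y) + W y * D 1 (W y) \<partial>M) = 2 * (q - c * r)"
    using I by (simp add: q_def r_def c_def prob_space integral_diff integral_add)
  moreover have "(\<integral>y. (W y)\<^sup>2 * p + s * D 2 (W y) \<partial>M) = 2 * (s * p)"
    using I by (simp add: p_def s_def)
  ultimately have "q - c * r \<le> s * p" by simp
  then show ?thesis using lhs by (simp add: c_def s_def p_def)
qed

end
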